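(* For each $N\ge1$ let $\{a_n\}_{n=0}^{N-1},\{b_n\}_{n=0}^{N-1},\{c_n\}_{n=1}^{N}$ (depending on $N$) be real sequences with $c_n>0$, $a_{N-1}=0$, $b_{N-1}=\tfrac12$, $c_N=1$, satisfying for $n=1,\dots,N-1$ $$a_{n-1}=a_n\Big(\frac{1}{c_n^2+1}\Big)^{1/2}+b_n\Big(\frac{1}{c_n^2+1}\Big)^{3/2}c_n^2,\quad b_{n-1}=b_n\Big(\frac{1}{c_n^2+1}\Big)^{3/2}+\frac{c_n}{c_n^2+1},\quad -3b_nc_n+(c_n^2+1)^{1/2}(1-c_n^2)=0,$$ and with $\Delta t_N=1/N$, $\Sigma_0>0$, $\sigma_u>0$ define $\Sigma_n=\Sigma_{n-1}/(1+c_n^2)$, $\beta_n=c_n\sigma_u\Delta t_N^{1/2}\Sigma_{n-1}^{-1/2}$, $\lambda_n=\beta_n\Sigma_{n-1}/(\beta_n^2\Sigma_{n-1}+\sigma_u^2\Delta t_N)$ for $n=1,\dots,N$. Then for every $t\in(0,1)$, as $N\to\infty$: $c_{[Nt]}\to0$, $b_{[Nt]}\to\infty$, $a_{[Nt]}\to\infty$, and $$\frac{c_{[Nt]}}{\Delta t_N^{1/2}}\to\frac{\sqrt3}{3}\frac{1}{(1-t)^{1/2}},\quad b_{[Nt]}\Delta t_N^{1/2}\to\frac{\sqrt3}{3}(1-t)^{1/2},\quad a_{[Nt]}\Delta t_N^{1/2}\to\frac{\sqrt3}{6}(1-t)^{1/2},$$ $$\Sigma_{[Nt]}\to(1-t)^{1/3}\Sigma_0,\qquad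 \lambda_{[Nt]}\to\frac{\sqrt3\,\Sigma_0^{1/2}}{3(1-t)^{1/3}\sigma_u},\qquad \frac{\beta_{[Nt]}}{\Delta t_N}\to\frac{\sqrt3\,\sigma_u}{3(1-t)^{2/3}\Sigma_0^{1/2}}.$$
   Context: $[x]$ denotes the integer part of $x$. These sequences describe the equilibrium of the risk-seeking insider model (Model 3) of an $N$-period Kyle-type insider trading model, where $\Sigma_n$ is the conditional variance of the asset value after $n$ rounds, $\lambda_n$ the liquidity parameter and $\beta_n$ the insider's trading intensity; the claim concerns only the sequences as defined here. *)

theory Defs
  imports Complex_Main
begin

fun Sigma :: "(nat \<Rightarrow> nat \<Rightarrow> real) \<Rightarrow> real \<Rightarrow> nat \<Rightarrow> nat \<Rightarrow> real" where
  "Sigma c S0 N 0 = S0"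
| "Sigma c S0 N (Suc n) = Sigma c S0 N n / (1 + (c N (Suc n))^2)"

definition dt :: "nat \<Rightarrow> real" where
  "dt N = 1 / real N"

definition beta :: "(nat \<Rightarrow> nat \<Rightarrow> real) \<Rightarrow> real \<Rightarrow> real \<Rightarrow> nat \<Rightarrow> nat \<Rightarrow> real" where
  "beta c S0 su N n = c N n * su * dt N powr (1/2) * Sigma c S0 N (n - 1) powr (-1/2)"

definition lambda :: "(nat \<Rightarrow> nat \<Rightarrow> real) \<Rightarrow> real \<Rightarrow> real \<Rightarrow> nat \<Rightarrow> nat \<Rightarrow> real" where
  "lambda c S0 su N n = beta c S0 su N n * Sigma c S0 N (n - 1) /
     ((beta c S0 su N n)^2 * Sigma c S0 N (n - 1) + su^2 * dt N)"

end

theory Submission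
  imports Defs "HOL-Real_Asymp.Real_Asymp"
begin


lemma p12: "y > 0 \<Longrightarrow> (1/y) powr (1/2) = 1/sqrt y"
  by (simp add: powr_half_sqrt real_sqrt_divide)

lemma p32: "y > 0 \<Longrightarrow> (1/y) powr (3/2) = 1/(y*sqrt y)"
proof -
  assume y: "y > 0"
  have "(1/y) powr (3/2) = (1/y) powr (1 + 1/2)" by simp
  also have "\<dots> = (1/y) * (1/y) powr (1/2)" using y by (subst powr_add) simp
  also have "\<dots> = 1/(y*sqrt y)" using y by (simp add: p12)
  finally show ?thesis .
qed

lemma q12: "y > 0 \<Longrightarrow> y powr (1/2) = sqrt y"
  by (simp add: powr_half_sqrt)


lemma alg2:
  fixes c s an :: real assumes "c > 0" "s > 0"
  shows "(1+2*c^2)/(3*c*(1+c^2)) - 2*(an/s + (1-c^2)/(3*c*(1+c^2))*c^2)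
     = ((1-c^2)*s/(3*c) - 2*an)/s + c^3/(1+c^2)"
proof -
  define p where "p = 1 + c^2"
  have p: "p > 0" unfolding p_def by (simp add: add_pos_nonneg)
  have "(1+2*c^2)/(3*c*p) - 2*(an/s + (1-c^2)/(3*c*p)*c^2)
     = ((1-c^2)*s/(3*c) - 2*an)/s + c^3/p"
    using p assms by (simp add: field_simps) (simp add: p_def; algebra)
  then show ?thesis by (simp add: p_def)
qed

lemma algB:
  fixes x :: real assumes "x > 0"
  shows "((1+2*x)/(3*sqrt x*(1+x)))^2 - ((1-x)*sqrt(1+x)/(3*sqrt x))^2 = 1/3 - x^2*(1+x+x^2)/(9*(1+x)^2)"
proof -
  have p: "1 + x > 0" using assms by simp
  have "((1+2*x)/(3*sqrt x*(1+x)))^2 = (1+2*x)^2/(9*x*(1+x)^2)"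
    using assms by (simp add: power_divide power_mult_distrib)
  moreover have "((1-x)*sqrt(1+x)/(3*sqrt x))^2 = (1-x)^2*(1+x)/(9*x)"
    using assms p by (simp add: power_divide power_mult_distrib)
  moreover have "(1+2*x)^2/(9*x*(1+x)^2) - (1-x)^2*(1+x)/(9*x) = 1/3 - x^2*(1+x+x^2)/(9*(1+x)^2)"
    using assms p by (simp add: field_simps) algebra
  ultimately show ?thesis by simp
qed

lemma algE: "x > 0 \<Longrightarrow> (x::real) < 1 \<Longrightarrow> 0 \<le> x^2*(1+x+x^2)/(9*(1+x)^2) \<and> x^2*(1+x+x^2)/(9*(1+x)^2) \<le> x^2/9"
proof -
  assume x: "x > 0" "x < 1"
  have "x^2*(1+x+x^2) \<le> x^2 * (1+x)^2"
    using x by (intro mult_left_mono) (auto simp: power2_eq_square algebra_simps)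
  then show ?thesis using x by (auto simp: divide_simps)
qed

lemma algRho:
  fixes x :: real assumes "x > 0" "x \<le> 1/2"
  shows "1 \<le> (1+2*x)/((1-x^2)*(1+x)^2)" "(1+2*x)/((1-x^2)*(1+x)^2) \<le> 1 + 2*x^3"
proof -
  have e: "(1-x^2)*(1+x)^2 = 1 + 2*x - 2*x^3 - x^4" by (simp add: algebra_simps power2_eq_square power3_eq_cube power4_eq_xxxx)
  have "x*x \<le> x*(1/2)" using assms by (intro mult_left_mono) auto
  hence "1 - x^2 > 0" using assms unfolding power2_eq_square by linarith
  hence pos: "(1-x^2)*(1+x)^2 > 0" using assms by simp
  have "0 \<le> 2*x^3 + x^4" using assms by simp
  hence "1 + 2*x - 2*x^3 - x^4 \<le> 1 + 2*x" by simp
  then show "1 \<le> (1+2*x)/((1-x^2)*(1+x)^2)" using pos e by (simp add: divide_simps)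
  have x2: "x^2 \<le> (1/2)^2" using assms by (intro power_mono) auto
  have x3: "x^3 \<le> (1/2)^3" using assms by (intro power_mono) auto
  have "4*x^2 + 2*x^3 \<le> 3" using x2 x3 by (simp add: power_divide)
  hence "0 \<le> x^4 * (3 - 4*x^2 - 2*x^3)" by simp
  also have "x^4 * (3 - 4*x^2 - 2*x^3) = (1 + 2*x^3) * (1 + 2*x - 2*x^3 - x^4) - (1 + 2*x)"
    by (simp add: algebra_simps power2_eq_square power3_eq_cube power4_eq_xxxx)
  finally have "1 + 2*x \<le> (1 + 2*x^3) * (1 + 2*x - 2*x^3 - x^4)" by simp
  then show "(1+2*x)/((1-x^2)*(1+x)^2) \<le> 1 + 2*x^3" using pos e by (simp add: divide_simps)
qed

lemma algD:
  fixes c x s :: real assumes "c > 0" "x = c^2" "x < 1" "s = sqrt (1+x)"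
  shows "2*c^3 \<le> 3*c/((1-x)*s) - 3*c*(1+x)/(1+2*x)"
proof -
  have x: "x > 0" using assms by simp
  have s1: "s \<le> 1 + x/2" unfolding assms(4)
    by (rule real_le_lsqrt) (use x in \<open>auto simp: power2_eq_square algebra_simps\<close>)
  have s0: "s > 0" using x assms(4) by simp
  have "3*c/((1-x)*(1+x/2)) \<le> 3*c/((1-x)*s)"
    using s1 s0 assms x by (intro divide_left_mono mult_left_mono mult_pos_pos) (auto simp: add_pos_nonneg)
  moreover have "2*c^3 \<le> 3*c/((1-x)*(1+x/2)) - 3*c*(1+x)/(1+2*x)"
  proof -
    have d1: "(1-x)*(1+x/2) > 0" using x assms(3) by simp
    have d2: "1 + 2*x > 0" using x by simp
    have key: "3*(1+2*x) - (2*x*(1+2*x)+3*(1+x))*((1-x)*(1+x/2)) = 5/2*x + 9/2*x^3 + 2*x^4"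
      by algebra
    have "0 \<le> 5/2*x + 9/2*x^3 + 2*x^4" using x by simp
    hence "(2*x*(1+2*x)+3*(1+x))*((1-x)*(1+x/2)) \<le> 3*(1+2*x)" using key by simp
    hence "2*x*(1+2*x)+3*(1+x) \<le> 3*(1+2*x) / ((1-x)*(1+x/2))" using d1 by (simp add: le_divide_eq)
    hence "2*x + 3*(1+x)/(1+2*x) \<le> 3 / ((1-x)*(1+x/2))" using d2 d1
      by (simp add: field_simps)
    hence "2*x \<le> 3/((1-x)*(1+x/2)) - 3*(1+x)/(1+2*x)" by simp
    then have "c*(2*x) \<le> c*(3/((1-x)*(1+x/2)) - 3*(1+x)/(1+2*x))" using assms(1) by (intro mult_left_mono) simp_all
    then show ?thesis using assms(2) by (simp add: power3_eq_cube power2_eq_square algebra_simps)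
  qed
  ultimately show ?thesis by simp
qed

lemma alg1:
  fixes c s :: real assumes "c > 0" "s > 0"
  shows "(1-c^2)*s/(3*c) * (1/((1+c^2)*s)) + c/(1+c^2) = (1+2*c^2)/(3*c*(1+c^2))"
proof -
  define p where "p = 1 + c^2"
  have p: "p > 0" unfolding p_def by (simp add: add_pos_nonneg)
  have "(1-c^2)*s/(3*c) * (1/(p*s)) + c/p = (1+2*c^2)/(3*c*p)"
    using p assms by (simp add: field_simps) (simp add: p_def algebra_simps power2_eq_square)
  then show ?thesis by (simp add: p_def)
qed

lemma cancel_s: "(s::real) > 0 \<Longrightarrow> A*s/D/(P*s) = A/(D*P)"
  by simp


lemma ratU: fixes u :: real assumes "u \<ge> 1"
  shows "(u-1)/(12*u) + 16/(729*u^2) \<le> u/(12*(u+1))"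
proof -
  have p: "u > 0" "u + 1 > 0" using assms by auto
  have "(u-1)/(12*u) + 16/(729*u^2) = (729*u*(u-1) + 192)/(8748*u^2)"
    using p by (simp add: field_simps power2_eq_square)
  also have "\<dots> \<le> u/(12*(u+1))"
    using p assms by (simp add: field_simps power2_eq_square)
  finally show ?thesis .
qed
lemma ratK: fixes K :: real assumes "K \<ge> 0"
  shows "K/(12*(K+1)) + 16/(729*(K+1)^2) \<le> (K+1)/(12*(K+2))"
  using ratU[of "K+1"] assms by (simp add: add.assoc)

lemma lin1: "(1/4::real) + K/3 - A \<le> Bn \<Longrightarrow> Bn + 1/3 - X \<le> Bm \<Longrightarrow> X \<le> E \<Longrightarrow> A + E \<le> C
  \<Longrightarrow> 1/4 + (K+1)/3 - C \<le> Bm" unfolding add_divide_distrib by linarith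

lemma lin2: "Bn \<le> (1/4::real) + K/3 \<Longrightarrow> Bm \<le> Bn + 1/3 \<Longrightarrow> Bm \<le> 1/4 + (K+1)/3"
  unfolding add_divide_distrib by linarith

lemma lin3: "(D'::real) = U + V \<Longrightarrow> 2*C \<le> 1/B - 1/B' \<Longrightarrow> U \<le> D \<Longrightarrow> V \<le> C
  \<Longrightarrow> D + 1/(2*B) \<le> 3/2 \<Longrightarrow> D' + 1/(2*B') \<le> 3/2"
proof -
  assume h: "(D'::real) = U + V" "2*C \<le> 1/B - 1/B'" "U \<le> D" "V \<le> C" "D + 1/(2*B) \<le> 3/2"
  have "1/(2*B) = (1/B)/2" "1/(2*B') = (1/B')/2" by simp_all
  then show ?thesis using h by linarith
qed

locale model =
  fixes a b c :: "nat \<Rightarrow> real" and N :: nat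
  assumes N1: "N \<ge> 1"
  and cpos: "\<And>n. 1 \<le> n \<Longrightarrow> n \<le> N \<Longrightarrow> c n > 0"
  and aT: "a (N-1) = 0" and bT: "b (N-1) = 1/2"
  and reca: "\<And>n. 1 \<le> n \<Longrightarrow> n \<le> N - 1 \<Longrightarrow>
       a (n - 1) = a n * (1 / ((c n)^2 + 1)) powr (1/2)
                     + b n * (1 / ((c n)^2 + 1)) powr (3/2) * (c n)^2"
  and recb: "\<And>n. 1 \<le> n \<Longrightarrow> n \<le> N - 1 \<Longrightarrow>
       b (n - 1) = b n * (1 / ((c n)^2 + 1)) powr (3/2) + c n / ((c n)^2 + 1)"
  and recc: "\<And>n. 1 \<le> n \<Longrightarrow> n \<le> N - 1 \<Longrightarrow>
       - 3 * b n * c n + ((c n)^2 + 1) powr (1/2) * (1 - (c n)^2) = 0"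
begin

lemma step:
  assumes n: "1 \<le> n" "n \<le> N-1"
  shows "b n = (1 - c n^2) * sqrt(1 + c n^2) / (3 * c n)"
    and "b (n-1) = (1 + 2*c n^2)/(3*c n*(1 + c n^2))"
    and "b (n-1) - 2*a (n-1) = (b n - 2*a n)/sqrt(1+c n^2) + c n^3/(1 + c n^2)"
proof -
  define x where "x = c n ^2"
  define s where "s = sqrt (1 + x)"
  have c: "c n > 0" using cpos n by simp
  have x: "x > 0" using c by (simp add: x_def)
  have s: "s > 0" "s^2 = 1 + x" using x by (simp_all add: s_def)
  have p1: "0 < 1 + c n^2" by (simp add: add_pos_nonneg)
  have e1: "(c n ^2 + 1) powr (1/2) = s" using q12[OF p1] by (simp add: s_def x_def add.commute)
  have e2: "(1 / (c n ^2 + 1)) powr (1/2) = 1/s" using p12[OF p1] by (simp add: s_def x_def add.commute)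
  have e3: "(1 / (c n ^2 + 1)) powr (3/2) = 1/((1+c n^2)*s)" using p32[OF p1] by (simp add: s_def x_def add.commute)
  have B: "b n = (1 - c n^2) * s / (3 * c n)"
    using recc[OF n] e1 c by (simp add: x_def field_simps)
  then show "b n = (1 - c n^2) * sqrt(1 + c n^2) / (3 * c n)" by (simp add: x_def s_def)
  have "b (n-1) = b n * (1/((1+c n^2)*s)) + c n / (1 + c n^2)"
    using recb[OF n] e3 by (simp add: add.commute)
  also have "\<dots> = (1 + 2*c n^2)/(3*c n*(1 + c n^2))"
    unfolding B by (rule alg1[OF c s(1)])
  finally show B1: "b (n-1) = (1 + 2*c n^2)/(3*c n*(1 + c n^2))" .
  have B2: "b n / ((1+c n^2)*s) = (1 - c n^2)/(3*c n*(1 + c n^2))"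
    unfolding B using s(1) by (simp add: cancel_s)
  have A: "a (n-1) = a n / s + (1 - c n^2)/(3*c n*(1 + c n^2)) * c n^2"
    using reca[OF n] e2 e3 B2 by (simp add: add.commute)
  have "b (n-1) - 2*a (n-1) = (b n - 2*a n)/s + c n^3/(1 + c n^2)"
    unfolding A B1 using alg2[OF c s(1), of "a n"] B by simp
  then show "b (n-1) - 2*a (n-1) = (b n - 2*a n)/sqrt(1+c n^2) + c n^3/(1 + c n^2)"
    by (simp add: s_def x_def)
qed


lemma bpos: assumes "n \<le> N-1" shows "b n > 0"
proof (cases "n = N-1")
  case True then show ?thesis using bT by simp
next
  case False
  then have n: "1 \<le> Suc n" "Suc n \<le> N-1" using assms by auto
  have c: "c (Suc n) > 0" using cpos n by simp
  have p1: "0 < 1 + c (Suc n)^2" by (simp add: add_pos_nonneg)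
  have "b n = (1 + 2*c (Suc n)^2)/(3*c (Suc n)*(1 + c (Suc n)^2))"
    using step(2)[OF n] by simp
  also have "\<dots> > 0" using c p1 by (simp add: add_pos_nonneg)
  finally show ?thesis .
qed

lemma facts:
  assumes n: "1 \<le> n" "n \<le> N-1"
  defines "x \<equiv> c n^2"
  shows "0 < x" "x < 1" "9*x*b n^2 \<le> 1"
    and "b n^2 + 1/3 - x^2/9 \<le> b (n-1)^2" "b (n-1)^2 \<le> b n^2 + 1/3"
    and "b (n-1)^2 = ((1+2*x)/((1-x^2)*(1+x)^2))^2 * (1+x)^3 * b n^2"
    and "b (n-1) - 2*a (n-1) = (b n - 2*a n)/sqrt(1+x) + c n^3/(1 + x)"
    and "2*c n^3 \<le> 1/b n - 1/b (n-1)"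
proof -
  have c: "c n > 0" using cpos n by simp
  show x: "0 < x" using c by (simp add: x_def)
  have cx: "c n = sqrt x" using c by (simp add: x_def)
  have bn: "b n = (1-x)*sqrt(1+x)/(3*sqrt x)" using step(1)[OF n, folded x_def] by (simp only: cx[symmetric])
  have bn1: "b (n-1) = (1+2*x)/(3*sqrt x*(1+x))" using step(2)[OF n, folded x_def] by (simp only: cx[symmetric])
  have "b n > 0" using bpos n by simp
  then show x1: "x < 1" using bn x by (simp add: zero_less_divide_iff zero_less_mult_iff)
  have bn2: "b n^2 = (1-x)^2*(1+x)/(9*x)" unfolding bn using x
    by (simp add: power_divide power_mult_distrib)
  have "(1-x)^2*(1+x) \<le> 1"
  proof -
    have "(1-x)^2*(1+x) = (1-x)*(1-x^2)" by (simp add: algebra_simps power2_eq_square)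
    also have "\<dots> \<le> 1 * 1" using x x1 by (intro mult_mono) (auto simp: power2_eq_square mult_le_one)
    finally show ?thesis by simp
  qed
  then show "9*x*b n^2 \<le> 1" unfolding bn2 using x by simp
  have D: "b (n-1)^2 - b n^2 = 1/3 - x^2*(1+x+x^2)/(9*(1+x)^2)"
    unfolding bn bn1 by (rule algB[OF x])
  show "b n^2 + 1/3 - x^2/9 \<le> b (n-1)^2" "b (n-1)^2 \<le> b n^2 + 1/3"
    using D algE[OF x x1] by linarith+
  have bn12: "b (n-1)^2 = (1+2*x)^2/(9*x*(1+x)^2)" unfolding bn1 using x
    by (simp add: power_divide power_mult_distrib)
  have "x*x < 1*1" using x x1 by (intro mult_strict_mono) auto
  hence "1 - x^2 > 0" by (simp add: power2_eq_square)
  then show "b (n-1)^2 = ((1+2*x)/((1-x^2)*(1+x)^2))^2 * (1+x)^3 * b n^2"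
    unfolding bn12 bn2 using x x1 by (simp add: field_simps) (simp add: algebra_simps power2_eq_square; algebra)
  show "b (n-1) - 2*a (n-1) = (b n - 2*a n)/sqrt(1+x) + c n^3/(1 + x)"
    using step(3)[OF n, folded x_def] .
  have s: "sqrt (1+x) > 0" using x by simp
  have ib: "1/b n = 3*c n/((1-x)*sqrt(1+x))" using step(1)[OF n, folded x_def] by simp
  have ib1: "1/b (n-1) = 3*c n*(1+x)/(1+2*x)" using step(2)[OF n, folded x_def] by simp
  show "2*c n^3 \<le> 1/b n - 1/b (n-1)" unfolding ib ib1
    by (rule algD[OF c _ x1 refl]) (simp add: x_def)
qed


lemma Bbounds: "k \<le> N-1 \<Longrightarrow> 1/4 + k/3 - k/(12*(k+1)) \<le> b (N-1-k)^2 \<and> b (N-1-k)^2 \<le> 1/4 + k/3"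
proof (induction k)
  case 0
  have "b (N-1)^2 = 1/4" unfolding bT by (simp add: power2_eq_square)
  then show ?case by simp
next
  case (Suc k)
  define n where "n = N-1-k"
  have n: "1 \<le> n" "n \<le> N-1" using Suc.prems by (auto simp: n_def)
  have nk: "N - 1 - Suc k = n - 1" by (simp add: n_def)
  have IH: "1/4 + real k/3 - real k/(12*(real k+1)) \<le> b n^2" "b n^2 \<le> 1/4 + real k/3"
    using Suc.IH[OF Suc_leD[OF Suc.prems]] unfolding n_def by blast+
  have "real k/(12*(real k+1)) \<le> real k/12" by (rule frac_le) auto
  then have Bk: "b n^2 \<ge> (real k+1)/4" using IH by simp
  define x where "x = c n^2"
  have F: "0 < x" "9*x*b n^2 \<le> 1" "b n^2 + 1/3 - x^2/9 \<le> b (n-1)^2" "b (n-1)^2 \<le> b n^2 + 1/3"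
    using facts[OF n] by (simp_all add: x_def)
  have "9*x*((real k+1)/4) \<le> 9*x*b n^2" using Bk F(1) by (intro mult_left_mono) auto
  then have "x \<le> 4/(9*(real k+1))" using F by (simp add: field_simps)
  then have "x^2 \<le> (4/(9*(real k+1)))^2" using F by (intro power_mono) auto
  also have "(4/(9*(real k+1)))^2 = 16/(81*(real k+1)^2)" by (simp only: power_divide power_mult_distrib) simp
  finally have x2: "x^2/9 \<le> 16/(729*(real k+1)^2)" by simp
  have r: "real k/(12*(real k+1)) + 16/(729*(real k+1)^2) \<le> (real k+1)/(12*(real k+2))"
    by (rule ratK) simp
  have e1: "real (Suc k) = real k + 1" by simp
  have e2: "real (Suc k) + 1 = real k + 2" by simp
  have g1: "1 / 4 + (real k + 1) / 3 - (real k + 1) / (12 * (real k + 2)) \<le> b (n-1)^2"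
    by (rule lin1[OF IH(1) F(3) x2 r])
  have g2: "b (n-1)^2 \<le> 1 / 4 + (real k + 1) / 3" by (rule lin2[OF IH(2) F(4)])
  show ?case unfolding nk e2 unfolding e1 using g1 g2 by blast
qed

lemma Blow: assumes "1 \<le> n" "n \<le> N-1" shows "b n^2 \<ge> (real N - real n)/4" "c n^2 \<le> 4/(9*(real N - real n))"
proof -
  define k where "k = N-1-n"
  have nk: "n = N-1-k" "k \<le> N-1" using assms by (auto simp: k_def)
  have "real k/(12*(real k+1)) \<le> real k/12" by (rule frac_le) auto
  then have "b n^2 \<ge> (real k+1)/4" using Bbounds[OF nk(2)] nk(1) by simp
  moreover have "real k + 1 = real N - real n" using assms by (simp add: k_def of_nat_diff)
  ultimately show B: "b n^2 \<ge> (real N - real n)/4" by simp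
  have F: "0 < c n^2" "9*c n^2*b n^2 \<le> 1" using facts[OF assms] by simp_all
  have Np: "real N - real n > 0" using assms by simp
  have "9*c n^2*((real N - real n)/4) \<le> 9*c n^2*b n^2" using B F(1) by (intro mult_left_mono) auto
  then show "c n^2 \<le> 4/(9*(real N - real n))" using F Np by (simp add: field_simps)
qed


lemma dbound: "k \<le> N-1 \<Longrightarrow> 0 \<le> b (N-1-k) - 2*a (N-1-k) \<and> (b (N-1-k) - 2*a (N-1-k)) + 1/(2*b (N-1-k)) \<le> 3/2"
proof (induction k)
  case 0
  have z: "N-1-0 = N-1" by simp
  show ?case unfolding z aT bT by simp
next
  case (Suc k)
  define n where "n = N-1-k"
  have n: "1 \<le> n" "n \<le> N-1" using Suc.prems by (auto simp: n_def)
  have nk: "N - 1 - Suc k = n - 1" by (simp add: n_def)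
  have IH: "0 \<le> b n - 2*a n" "(b n - 2*a n) + 1/(2*b n) \<le> 3/2"
    using Suc.IH[OF Suc_leD[OF Suc.prems]] unfolding n_def by blast+
  define x where "x = c n^2"
  have F: "0 < x" "b (n-1) - 2*a (n-1) = (b n - 2*a n)/sqrt(1+x) + c n^3/(1 + x)"
     "2*c n^3 \<le> 1/b n - 1/b (n-1)"
    using facts[OF n] by (simp_all add: x_def)
  have c: "c n > 0" using cpos n by simp
  have s1: "sqrt (1+x) \<ge> 1" using F(1) by simp
  have t1: "(b n - 2*a n)/sqrt(1+x) \<le> b n - 2*a n" using IH(1) s1
    by (simp add: divide_le_eq mult_le_cancel_left1)
  have t1': "0 \<le> (b n - 2*a n)/sqrt(1+x)" using IH(1) s1 by simp
  have c3: "0 \<le> c n^3" using c by simp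
  have t2: "c n^3/(1+x) \<le> c n^3" using F(1) c3 by (simp add: divide_le_eq mult_le_cancel_left1)
  have t2': "0 \<le> c n^3/(1+x)" using F(1) c3 by simp
  have "0 \<le> b (n-1) - 2*a (n-1)" using F(2) t1' t2' by simp
  moreover have "(b (n-1) - 2*a (n-1)) + 1/(2*b (n-1)) \<le> 3/2"
    by (rule lin3[OF F(2,3) t1 t2 IH(2)])
  ultimately show ?case unfolding nk by blast
qed

definition P :: "nat \<Rightarrow> real" where "P m = (\<Prod>j\<in>{1..m}. 1 + c j^2)"

lemma P_Suc: "P (Suc m) = P m * (1 + c (Suc m)^2)"
  unfolding P_def by simp

lemma Sig: "n \<le> N-1 \<Longrightarrow> \<eta> \<ge> 0 \<Longrightarrow> (\<forall>j. 1 \<le> j \<longrightarrow> j \<le> n \<longrightarrow> c j^2 \<le> \<eta>) \<Longrightarrow>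
   b n^2 * P n^3 \<le> b 0^2 \<and> b 0^2 \<le> b n^2 * P n^3 * (1+2*\<eta>^3)^(2*n)"
proof (induction n)
  case 0 then show ?case by (simp add: P_def)
next
  case (Suc n)
  have m: "1 \<le> Suc n" "Suc n \<le> N-1" using Suc.prems by auto
  define x where "x = c (Suc n)^2"
  have F: "0 < x" "9*x*b (Suc n)^2 \<le> 1"
    "b n^2 = ((1+2*x)/((1-x^2)*(1+x)^2))^2 * (1+x)^3 * b (Suc n)^2"
    using facts[OF m] by (simp_all add: x_def)
  have B4: "b (Suc n)^2 \<ge> 1/4" using Blow(1)[OF m] m by (simp add: of_nat_diff) 
  have "9*x*(1/4) \<le> 9*x*b (Suc n)^2" using B4 F(1) by (intro mult_left_mono) auto
  then have xh: "x \<le> 1/2" using F(2) by simp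
  define r where "r = (1+2*x)/((1-x^2)*(1+x)^2)"
  have r1: "1 \<le> r" "r \<le> 1 + 2*x^3" using algRho[OF F(1) xh] by (simp_all add: r_def)
  have xe: "x \<le> \<eta>" using Suc.prems(3) by (auto simp: x_def)
  have "x^3 \<le> \<eta>^3" using xe F(1) by (intro power_mono) auto
  then have r2: "r \<le> 1 + 2*\<eta>^3" using r1 by simp
  have rr1: "1 \<le> r^2" using r1 by (simp add: one_le_power)
  have rr2: "r^2 \<le> (1 + 2*\<eta>^3)^2" using r1 r2 by (intro power_mono) auto
  define y where "y = b (Suc n)^2 * P (Suc n)^3"
  have y0: "0 \<le> y" unfolding y_def P_def by (intro mult_nonneg_nonneg zero_le_power2 zero_le_power prod_nonneg) auto
  have e: "b n^2 * P n^3 = r^2 * y"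
    unfolding y_def P_Suc F(3) r_def[symmetric] x_def[symmetric] by (simp add: power_mult_distrib)
  have IH: "r^2 * y \<le> b 0^2" "b 0^2 \<le> r^2 * y * (1+2*\<eta>^3)^(2*n)"
    using Suc.IH Suc.prems e by auto
  have "y \<le> r^2 * y" using rr1 y0 by (simp add: mult_le_cancel_right1)
  then have g1: "y \<le> b 0^2" using IH(1) by simp
  have Q0: "0 \<le> (1+2*\<eta>^3)^(2*n)" using Suc.prems(2) by simp
  have "r^2 * y * (1+2*\<eta>^3)^(2*n) \<le> (1 + 2*\<eta>^3)^2 * y * (1+2*\<eta>^3)^(2*n)"
    using rr2 y0 Q0 by (intro mult_right_mono) auto
  also have "\<dots> = y * (1+2*\<eta>^3)^(2*Suc n)" by (simp add: power_add[symmetric] mult.commute)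
  finally have g2: "b 0^2 \<le> y * (1+2*\<eta>^3)^(2*Suc n)" using IH(2) by simp
  show ?case using g1 g2 unfolding y_def by simp
qed


lemma collect:
  assumes n: "1 \<le> n" "n \<le> N-1"
  defines "\<eta> \<equiv> 4/(9*(real N - real n))"
  shows "1/6 + (real N - 1 - real n)/3 \<le> b n^2" "b n^2 \<le> 1/4 + (real N - 1 - real n)/3"
    "1/6 + (real N - 1)/3 \<le> b 0^2" "b 0^2 \<le> 1/4 + (real N - 1)/3"
    "b n > 0" "0 \<le> b n - 2*a n" "b n - 2*a n \<le> 3/2"
    "c n > 0" "9*c n^2*b n^2 \<le> 1" "c n = (1 - c n^2)*sqrt(1+c n^2)/(3*b n)"
    "b n^2 * P n^3 \<le> b 0^2" "b 0^2 \<le> b n^2 * P n^3 * exp (4*real n*\<eta>^3)"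
proof -
  have kk: "\<And>k::nat. real k/(12*(real k+1)) \<le> 1/12"
    by (simp add: divide_simps)
  have k1: "N-1-n \<le> N-1" by simp
  have rk: "real (N-1-n) = real N - 1 - real n" using n by (simp add: of_nat_diff)
  have nn: "N - 1 - (N-1-n) = n" using n by simp
  from Bbounds[OF k1] kk[of "N-1-n"] show "1/6 + (real N - 1 - real n)/3 \<le> b n^2" "b n^2 \<le> 1/4 + (real N - 1 - real n)/3"
    unfolding rk nn by linarith+
  have k2: "N-1 \<le> N-1" by simp
  have rk2: "real (N-1) = real N - 1" using N1 by (simp add: of_nat_diff)
  have z: "N - 1 - (N-1) = 0" by simp
  from Bbounds[OF k2] kk[of "N-1"] show "1/6 + (real N - 1)/3 \<le> b 0^2" "b 0^2 \<le> 1/4 + (real N - 1)/3"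
    unfolding rk2 z by linarith+
  show bp: "b n > 0" using bpos n by simp
  from dbound[OF k1] bp show "0 \<le> b n - 2*a n" "b n - 2*a n \<le> 3/2" unfolding nn
    by (auto simp: add_pos_pos) (smt (verit) divide_pos_pos)
  show c: "c n > 0" using cpos n by simp
  show "9*c n^2*b n^2 \<le> 1" using facts(3)[OF n] by simp
  show "c n = (1 - c n^2)*sqrt(1+c n^2)/(3*b n)" using step(1)[OF n] c bp by (simp add: field_simps)
  have eta0: "\<eta> \<ge> 0" unfolding \<eta>_def using n by simp
  have cj: "\<forall>j. 1 \<le> j \<longrightarrow> j \<le> n \<longrightarrow> c j^2 \<le> \<eta>"
  proof (intro allI impI)
    fix j assume j: "1 \<le> j" "j \<le> n"
    have "c j^2 \<le> 4/(9*(real N - real j))" using Blow(2)[of j] j n by simp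
    also have "\<dots> \<le> \<eta>" unfolding \<eta>_def using j n by (intro divide_left_mono mult_left_mono mult_pos_pos) auto
    finally show "c j^2 \<le> \<eta>" .
  qed
  from Sig[OF n(2) eta0 cj] show S1: "b n^2 * P n^3 \<le> b 0^2" by simp
  have "(1 + 2*\<eta>^3)^(2*n) \<le> exp (2*\<eta>^3)^(2*n)"
    using eta0 by (intro power_mono exp_ge_add_one_self_aux) auto
  also have "\<dots> = exp (4*real n*\<eta>^3)" by (simp add: exp_of_nat_mult[symmetric] mult_ac)
  finally have Q: "(1 + 2*\<eta>^3)^(2*n) \<le> exp (4*real n*\<eta>^3)" .
  have y0: "0 \<le> b n^2 * P n^3" unfolding P_def by (intro mult_nonneg_nonneg zero_le_power2 zero_le_power prod_nonneg) auto
  from Sig[OF n(2) eta0 cj] have "b 0^2 \<le> b n^2 * P n^3 * (1+2*\<eta>^3)^(2*n)" by simp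
  also have "\<dots> \<le> b n^2 * P n^3 * exp (4*real n*\<eta>^3)" using Q y0 by (rule mult_left_mono)
  finally show "b 0^2 \<le> b n^2 * P n^3 * exp (4*real n*\<eta>^3)" .
qed

end




lemma s3: "sqrt 3 / 3 = 1 / sqrt (3::real)"
proof -
  have "sqrt 3 * sqrt 3 = (3::real)" by simp
  then show ?thesis by (simp add: field_simps)
qed
lemma G2: "(u::real) > 0 \<Longrightarrow> sqrt (u/3) = sqrt 3 / 3 * u powr (1/2)"
  by (simp add: s3 powr_half_sqrt real_sqrt_divide)
lemma G1: "(u::real) > 0 \<Longrightarrow> 1/(3*sqrt (u/3)) = sqrt 3 / 3 * (1 / u powr (1/2))"
  by (simp add: real_sqrt_divide powr_half_sqrt)
lemma G3: "(u::real) > 0 \<Longrightarrow> sqrt (u/3)/2 = sqrt 3 / 6 * u powr (1/2)"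
  using G2[of u] by simp
lemma G4: "(u::real) > 0 \<Longrightarrow> S0 > 0 \<Longrightarrow> (S0^3*u) powr (1/3) = u powr (1/3) * S0"
proof -
  assume u: "u > 0" and S: "S0 > 0"
  have e: "S0^3 = S0 powr 3" using powr_realpow[of S0 3] S by simp
  have "(S0^3) powr (1/3) = S0" unfolding e powr_powr using S by simp
  then show ?thesis using u S by (simp add: powr_mult)
qed
lemma G5: "(u::real) > 0 \<Longrightarrow> S0 > 0 \<Longrightarrow> su > 0 \<Longrightarrow>
  1/(3*sqrt (u/3)) * su * (u powr (1/3) * S0) powr (-1/2) = sqrt 3 * su / (3 * u powr (2/3) * S0 powr (1/2))"
proof -
  assume u: "u > 0" and S: "S0 > 0" and s: "su > 0"
  have a: "(u powr (1/3) * S0) powr (-1/2) = u powr (-1/6) * S0 powr (-1/2)"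
    using u S by (simp add: powr_mult powr_powr)
  have b: "1/(3*sqrt (u/3)) = 1/sqrt 3 * u powr (-1/2)"
    using G1[OF u] by (simp add: s3 powr_minus_divide)
  have c: "u powr (-1/2) * u powr (-1/6) = 1 / u powr (2/3)"
    using u by (simp add: powr_add[symmetric] powr_minus_divide)
  have d: "S0 powr (-1/2) = 1 / S0 powr (1/2)" by (simp add: powr_minus_divide)
  have "1/(3*sqrt (u/3)) * su * (u powr (1/3) * S0) powr (-1/2)
     = su/sqrt 3 * (u powr (-1/2) * u powr (-1/6)) * S0 powr (-1/2)" unfolding a b by simp
  also have "\<dots> = su/sqrt 3 / u powr (2/3) / S0 powr (1/2)" unfolding c d by simp
  also have "\<dots> = su*(1/sqrt 3) / u powr (2/3) / S0 powr (1/2)" by simp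
  also have "\<dots> = su*(sqrt 3/3) / u powr (2/3) / S0 powr (1/2)" by (simp only: s3)
  also have "\<dots> = sqrt 3 * su / (3 * u powr (2/3) * S0 powr (1/2))" by simp
  finally show ?thesis .
qed
lemma G6aux: "(p::real)>0 \<Longrightarrow> q>0 \<Longrightarrow> su>0 \<Longrightarrow> sqrt 3 * su / (3*(p*p)*q) * (p*(q*q))/su^2 = sqrt 3 * q/(3*p*su)"
  by (simp add: field_simps power2_eq_square)
lemma G6: "(u::real) > 0 \<Longrightarrow> S0 > 0 \<Longrightarrow> su > 0 \<Longrightarrow>
  sqrt 3 * su / (3 * u powr (2/3) * S0 powr (1/2)) * (u powr (1/3) * S0) / su^2
   = sqrt 3 * S0 powr (1/2) / (3 * u powr (1/3) * su)"
proof -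
  assume u: "u > 0" and S: "S0 > 0" and s: "su > 0"
  have a: "u powr (2/3) = u powr (1/3) * u powr (1/3)" using u by (simp add: powr_add[symmetric])
  have b: "u powr (1/3) * S0 = u powr (1/3) * (S0 powr (1/2) * S0 powr (1/2))" using S by (simp add: powr_add[symmetric])
  have p: "u powr (1/3) > 0" "S0 powr (1/2) > 0" using u S by auto
  show ?thesis unfolding a b by (rule G6aux[OF p s])
qed

lemma SigBnd: fixes P B B0 S E :: real
  assumes "P>0" "B>0" "B0>0" "S>0" "B*P^3 \<le> B0" "B0 \<le> B*P^3*E"
  shows "S^3*(B/B0) \<le> (S/P)^3" "(S/P)^3 \<le> S^3*(B/B0)*E"
proof -
  have P3: "P^3 > 0" using assms by simp
  have S3: "S^3 > 0" using assms by simp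
  have "B/B0 \<le> 1/P^3" using assms P3 by (simp add: divide_simps mult.commute)
  then have "S^3*(B/B0) \<le> S^3*(1/P^3)" using S3 by (intro mult_left_mono) auto
  then show "S^3*(B/B0) \<le> (S/P)^3" by (simp add: power_divide)
  have "1/P^3 \<le> (B/B0)*E" using assms P3 by (simp add: divide_simps mult.commute mult.left_commute)
  then have "S^3*(1/P^3) \<le> S^3*((B/B0)*E)" using S3 by (intro mult_left_mono) auto
  then show "(S/P)^3 \<le> S^3*(B/B0)*E" by (simp add: power_divide mult.assoc)
qed

lemma cube_root: "(x::real) > 0 \<Longrightarrow> (x^3) powr (1/3) = x"
proof -
  assume S: "x > 0"
  have e: "x^3 = x powr 3" using powr_realpow[of x 3] S by simp
  show ?thesis unfolding e powr_powr using S by simp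
qed

lemma betaAux: "(d::real) > 0 \<Longrightarrow> x * s * d powr (1/2) * y / d = x / d powr (1/2) * s * y"
proof -
  assume d: "d > 0"
  have e: "d = d powr (1/2) * d powr (1/2)" using d by (simp add: powr_add[symmetric])
  have p: "d powr (1/2) > 0" using d by simp
  show ?thesis by (subst (2) e) (use p in \<open>simp add: field_simps\<close>)
qed

lemma lamAux: "(d::real) > 0 \<Longrightarrow> S > 0 \<Longrightarrow> su > 0 \<Longrightarrow>
   \<beta>*S/(\<beta>^2*S + su^2*d) = (\<beta>/d)*S/((\<beta>/d)^2*S*d + su^2)"
proof -
  assume d: "d > 0" and S: "S > 0" and s: "su > 0"
  have p: "\<beta>^2*S + su^2*d > 0" using d S s by (intro add_nonneg_pos mult_nonneg_nonneg mult_pos_pos) auto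
  have "(\<beta>/d)^2*S*d + su^2 = (\<beta>^2*S + su^2*d)/d" using d by (simp add: field_simps power2_eq_square)
  moreover have "(\<beta>/d)*S = (\<beta>*S)/d" by simp
  ultimately show ?thesis using d by simp
qed

lemma Sigma_P: "Sigma c S0 N n = S0 / (\<Prod>j\<in>{1..n}. 1 + c N j^2)"
  by (induction n) (simp_all add: add.commute)

theorem theorem6:
  fixes a b c :: "nat \<Rightarrow> nat \<Rightarrow> real" and S0 su t :: real
  assumes cpos: "\<And>N n. N \<ge> 1 \<Longrightarrow> 1 \<le> n \<Longrightarrow> n \<le> N \<Longrightarrow> c N n > 0"
    and aT: "\<And>N. N \<ge> 1 \<Longrightarrow> a N (N - 1) = 0"
    and bT: "\<And>N. N \<ge> 1 \<Longrightarrow> b N (N - 1) = 1/2"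
    and cT: "\<And>N. N \<ge> 1 \<Longrightarrow> c N N = 1"
    and reca: "\<And>N n. N \<ge> 1 \<Longrightarrow> 1 \<le> n \<Longrightarrow> n \<le> N - 1 \<Longrightarrow>
       a N (n - 1) = a N n * (1 / ((c N n)^2 + 1)) powr (1/2)
                     + b N n * (1 / ((c N n)^2 + 1)) powr (3/2) * (c N n)^2"
    and recb: "\<And>N n. N \<ge> 1 \<Longrightarrow> 1 \<le> n \<Longrightarrow> n \<le> N - 1 \<Longrightarrow>
       b N (n - 1) = b N n * (1 / ((c N n)^2 + 1)) powr (3/2) + c N n / ((c N n)^2 + 1)"
    and recc: "\<And>N n. N \<ge> 1 \<Longrightarrow> 1 \<le> n \<Longrightarrow> n \<le> N - 1 \<Longrightarrow>
       - 3 * b N n * c N n + ((c N n)^2 + 1) powr (1/2) * (1 - (c N n)^2) = 0"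
    and S0pos: "S0 > 0" and supos: "su > 0"
    and t: "0 < t" "t < 1"
  shows "(\<lambda>N. c N (nat \<lfloor>real N * t\<rfloor>)) \<longlonglongrightarrow> 0
    \<and> filterlim (\<lambda>N. b N (nat \<lfloor>real N * t\<rfloor>)) at_top sequentially
    \<and> filterlim (\<lambda>N. a N (nat \<lfloor>real N * t\<rfloor>)) at_top sequentially
    \<and> (\<lambda>N. c N (nat \<lfloor>real N * t\<rfloor>) / dt N powr (1/2))
           \<longlonglongrightarrow> sqrt 3 / 3 * (1 / (1 - t) powr (1/2))
    \<and> (\<lambda>N. b N (nat \<lfloor>real N * t\<rfloor>) * dt N powr (1/2))
           \<longlonglongrightarrow> sqrt 3 / 3 * (1 - t) powr (1/2)
    \<and> (\<lambda>N. a N (nat \<lfloor>real N * t\<rfloor>) * dt N powr (1/2))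
           \<longlonglongrightarrow> sqrt 3 / 6 * (1 - t) powr (1/2)
    \<and> (\<lambda>N. Sigma c S0 N (nat \<lfloor>real N * t\<rfloor>)) \<longlonglongrightarrow> (1 - t) powr (1/3) * S0
    \<and> (\<lambda>N. lambda c S0 su N (nat \<lfloor>real N * t\<rfloor>))
           \<longlonglongrightarrow> sqrt 3 * S0 powr (1/2) / (3 * (1 - t) powr (1/3) * su)
    \<and> (\<lambda>N. beta c S0 su N (nat \<lfloor>real N * t\<rfloor>) / dt N)
           \<longlonglongrightarrow> sqrt 3 * su / (3 * (1 - t) powr (2/3) * S0 powr (1/2))"
  proof -
  note tt = t
  have M: "model (a N) (b N) (c N) N" if "N \<ge> 1" for N
    apply unfold_locales
    using that cpos aT bT reca recb recc by auto
  define nn where "nn N = nat \<lfloor>real N * t\<rfloor>" for N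
  obtain N0 :: nat where N0: "real N0 * t \<ge> 1" "N0 \<ge> 2"
  proof -
    obtain m :: nat where "real m \<ge> 1/t" using real_arch_simple by blast
    then have "real (m+2) * t \<ge> 1" using t by (simp add: field_simps)
    then show ?thesis by (intro that[of "m+2"]) auto
  qed
  have ev: "eventually (\<lambda>N. 2 \<le> N \<and> 1 \<le> nn N \<and> nn N \<le> N-1 \<and> real (nn N) \<le> real N * t
       \<and> real N * t - 1 \<le> real (nn N)) sequentially"
    unfolding eventually_sequentially
  proof (intro exI allI impI)
    fix N assume N: "N0 \<le> N"
    have Nt: "real N * t \<ge> 1" using N0 N t
      by (meson dual_order.trans less_imp_le mult_right_mono of_nat_le_iff)
    have f1: "\<lfloor>real N * t\<rfloor> \<ge> 1" using Nt by (simp add: le_floor_iff)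
    have "real N * t < real N" using t N N0 by simp
    then have f2: "\<lfloor>real N * t\<rfloor> < int N" by (simp add: floor_less_iff)
    have f3: "real_of_int \<lfloor>real N * t\<rfloor> \<le> real N * t" by simp
    have f4: "real N * t - 1 < real_of_int \<lfloor>real N * t\<rfloor>" by linarith
    have rn: "real (nn N) = real_of_int \<lfloor>real N * t\<rfloor>" unfolding nn_def using f1 by simp
    have g1: "1 \<le> nn N" using f1 unfolding nn_def by (simp add: le_nat_iff)
    have g2: "nn N < N" using f2 f1 unfolding nn_def by (simp add: nat_less_iff)
    show "2 \<le> N \<and> 1 \<le> nn N \<and> nn N \<le> N-1 \<and> real (nn N) \<le> real N * t \<and> real N * t - 1 \<le> real (nn N)"
      using N N0 g1 g2 f3 f4 rn by auto
  qed
  define B where "B N = b N (nn N)^2" for N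
  define B0 where "B0 N = b N 0^2" for N
  define bb where "bb N = b N (nn N)" for N
  define cc where "cc N = c N (nn N)" for N
  define dd where "dd N = b N (nn N) - 2*a N (nn N)" for N
  define PP where "PP N = (\<Prod>j\<in>{1..nn N}. 1 + c N j^2)" for N
  define EE where "EE N = exp (4*real N*(4/(9*(real N*(1-t))))^3)" for N
  have ev2: "eventually (\<lambda>N. 2 \<le> N \<and> 1 \<le> nn N \<and> nn N \<le> N-1 \<and>
      1/6 + (real N*(1-t) - 1)/3 \<le> B N \<and> B N \<le> 1/4 + real N*(1-t)/3 \<and>
      1/6 + (real N-1)/3 \<le> B0 N \<and> B0 N \<le> 1/4 + (real N-1)/3 \<and>
      bb N > 0 \<and> 0 \<le> dd N \<and> dd N \<le> 3/2 \<and> cc N > 0 \<and> 9*cc N^2*bb N^2 \<le> 1 \<and>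
      cc N = (1 - cc N^2)*sqrt(1+cc N^2)/(3*bb N) \<and>
      B N * PP N^3 \<le> B0 N \<and> B0 N \<le> B N * PP N^3 * EE N) sequentially"
    using ev
  proof eventually_elim
    case (elim N)
    then have N: "2 \<le> N" "1 \<le> nn N" "nn N \<le> N-1" "real (nn N) \<le> real N * t" "real N * t - 1 \<le> real (nn N)"
      by auto
    interpret model "a N" "b N" "c N" N using M N by simp
    note C = collect[OF N(2,3)]
    have r1: "real N - 1 - real (nn N) \<ge> real N*(1-t) - 1" using N by (simp add: algebra_simps)
    have r2: "real N - 1 - real (nn N) \<le> real N*(1-t)" using N by (simp add: algebra_simps)
    have Np: "real N*(1-t) > 0" using N tt by simp
    have gap: "real N - real (nn N) \<ge> real N*(1-t)" using N by (simp add: algebra_simps)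
    have et: "4/(9*(real N - real (nn N))) \<le> 4/(9*(real N*(1-t)))"
      using gap Np tt by (intro divide_left_mono mult_left_mono mult_pos_pos) auto
    have et0: "0 \<le> 4/(9*(real N - real (nn N)))" using gap Np tt(2) by simp
    have "4*real (nn N)*(4/(9*(real N - real (nn N))))^3 \<le> 4*real N*(4/(9*(real N*(1-t))))^3"
      using N et et0 by (intro mult_mono power_mono) auto
    then have EEb: "exp (4*real (nn N)*(4/(9*(real N - real (nn N))))^3) \<le> EE N"
      unfolding EE_def by simp
    have y0: "0 \<le> B N * PP N^3" unfolding B_def PP_def
      by (intro mult_nonneg_nonneg zero_le_power2 zero_le_power prod_nonneg) auto
    have PPe: "P (nn N) = PP N" unfolding P_def PP_def by simp
    have "B0 N \<le> B N * PP N^3 * exp (4*real (nn N)*(4/(9*(real N - real (nn N))))^3)"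
      using C(12) unfolding B0_def B_def PPe by simp
    also have "\<dots> \<le> B N * PP N^3 * EE N" using EEb y0 by (rule mult_left_mono)
    finally have U: "B0 N \<le> B N * PP N^3 * EE N" .
    have "(real N*(1-t) - 1)/3 \<le> (real N - 1 - real (nn N))/3" using r1 by (rule divide_right_mono) simp
    then have h1: "1/6 + (real N*(1-t) - 1)/3 \<le> B N" using C(1) unfolding B_def by linarith
    have "(real N - 1 - real (nn N))/3 \<le> real N*(1-t)/3" using r2 by (rule divide_right_mono) simp
    then have h2: "B N \<le> 1/4 + real N*(1-t)/3" using C(2) unfolding B_def by linarith
    show ?case using N C(3-11) U h1 h2 unfolding B_def B0_def bb_def cc_def dd_def PPe[symmetric]
      by blast
  qed
  have dtp: "dt N powr (1/2) = sqrt (1/real N)" if "N \<ge> 1" for N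
    using that q12[of "1/real N"] by (simp add: dt_def)
  have evN: "eventually (\<lambda>N. N \<ge> 1) sequentially" by (rule eventually_ge_at_top)
  have evB: "eventually (\<lambda>N. 1/6 + (real N*(1-t) - 1)/3 \<le> B N \<and> B N \<le> 1/4 + real N*(1-t)/3) sequentially"
    by (rule eventually_mono[OF ev2]) blast
  have evB0: "eventually (\<lambda>N. 1/6 + (real N-1)/3 \<le> B0 N \<and> B0 N \<le> 1/4 + (real N-1)/3) sequentially"
    by (rule eventually_mono[OF ev2]) blast
  have evb: "eventually (\<lambda>N. bb N > 0 \<and> 0 \<le> dd N \<and> dd N \<le> 3/2 \<and> cc N > 0 \<and> 9*cc N^2*bb N^2 \<le> 1) sequentially"
    by (rule eventually_mono[OF ev2]) blast
  have evc: "eventually (\<lambda>N. cc N = (1 - cc N^2)*sqrt(1+cc N^2)/(3*bb N)) sequentially"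
    by (rule eventually_mono[OF ev2]) blast
  have evP: "eventually (\<lambda>N. B N * PP N^3 \<le> B0 N \<and> B0 N \<le> B N * PP N^3 * EE N) sequentially"
    by (rule eventually_mono[OF ev2]) blast
  have evn: "eventually (\<lambda>N. 1 \<le> nn N \<and> nn N \<le> N - 1) sequentially"
    by (rule eventually_mono[OF ev2]) blast
  have lB: "(\<lambda>N. B N / real N) \<longlonglongrightarrow> (1-t)/3"
  proof (rule tendsto_sandwich[of "\<lambda>N. (1/6 + (real N*(1-t) - 1)/3)/real N" _ _ "\<lambda>N. (1/4 + real N*(1-t)/3)/real N"])
    show "eventually (\<lambda>N. (1/6 + (real N*(1-t) - 1)/3)/real N \<le> B N / real N) sequentially"
      using evB by eventually_elim (intro divide_right_mono, simp_all)
    show "eventually (\<lambda>N. B N / real N \<le> (1/4 + real N*(1-t)/3)/real N) sequentially"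
      using evB by eventually_elim (intro divide_right_mono, simp_all)
    show "(\<lambda>N. (1/6 + (real N*(1-t) - 1)/3)/real N) \<longlonglongrightarrow> (1-t)/3" using tt by real_asymp
    show "(\<lambda>N. (1/4 + real N*(1-t)/3)/real N) \<longlonglongrightarrow> (1-t)/3" using tt by real_asymp
  qed
  have lB0: "(\<lambda>N. B0 N / real N) \<longlonglongrightarrow> 1/3"
  proof (rule tendsto_sandwich[of "\<lambda>N. (1/6 + (real N - 1)/3)/real N" _ _ "\<lambda>N. (1/4 + (real N - 1)/3)/real N"])
    show "eventually (\<lambda>N. (1/6 + (real N - 1)/3)/real N \<le> B0 N / real N) sequentially"
      using evB0 by eventually_elim (intro divide_right_mono, simp_all)
    show "eventually (\<lambda>N. B0 N / real N \<le> (1/4 + (real N - 1)/3)/real N) sequentially"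
      using evB0 by eventually_elim (intro divide_right_mono, simp_all)
    show "(\<lambda>N. (1/6 + (real N - 1)/3)/real N) \<longlonglongrightarrow> 1/3" by real_asymp
    show "(\<lambda>N. (1/4 + (real N - 1)/3)/real N) \<longlonglongrightarrow> 1/3" by real_asymp
  qed
  define ell where "ell = sqrt ((1-t)/3)"
  have lpos: "ell > 0" unfolding ell_def using tt by simp
  have lb: "(\<lambda>N. bb N * dt N powr (1/2)) \<longlonglongrightarrow> ell"
  proof -
    have "(\<lambda>N. sqrt (B N / real N)) \<longlonglongrightarrow> ell" unfolding ell_def by (rule tendsto_real_sqrt[OF lB])
    moreover have "eventually (\<lambda>N. sqrt (B N / real N) = bb N * dt N powr (1/2)) sequentially"
      using evb evN
    proof eventually_elim
      case (elim N)
      then have "bb N > 0" "real N > 0" by auto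
      then show ?case using dtp[OF elim(2)] unfolding B_def bb_def[symmetric]
        by (simp add: real_sqrt_divide)
    qed
    ultimately show ?thesis by (rule Lim_transform_eventually)
  qed
  have sqrtN: "filterlim (\<lambda>N. sqrt (real N)) at_top sequentially" by real_asymp
  have dtsq: "eventually (\<lambda>N. dt N powr (1/2) * sqrt (real N) = 1) sequentially"
    using evN by eventually_elim (simp add: dtp real_sqrt_divide)
  have lbinf: "filterlim bb at_top sequentially"
  proof (rule filterlim_at_top_mono[OF filterlim_tendsto_pos_mult_at_top[OF lb lpos sqrtN]])
    show "eventually (\<lambda>N. bb N * dt N powr (1/2) * sqrt (real N) \<le> bb N) sequentially"
      using dtsq by eventually_elim (simp add: mult.assoc)
  qed
  have lc0: "(\<lambda>N. cc N) \<longlonglongrightarrow> 0"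
  proof (rule tendsto_sandwich[of "\<lambda>_. 0" _ _ "\<lambda>N. inverse (3 * bb N)"])
    show "eventually (\<lambda>N. 0 \<le> cc N) sequentially" using evb by eventually_elim auto
    show "eventually (\<lambda>N. cc N \<le> inverse (3 * bb N)) sequentially" using evb
    proof eventually_elim
      case (elim N)
      then have h: "bb N > 0" "cc N > 0" "9*cc N^2*bb N^2 \<le> 1" by auto
      have e: "(3*cc N*bb N)^2 = 9*cc N^2*bb N^2" by (simp only: power_mult_distrib) simp
      have "(3*cc N*bb N)^2 \<le> 1^2" unfolding e using h(3) by simp
      then have "3*cc N*bb N \<le> 1" by (rule power2_le_imp_le) simp
      then have "cc N * (3 * bb N) \<le> 1" by (simp only: mult_ac)
      then show ?case using h(1) by (simp add: inverse_eq_divide le_divide_eq)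
    qed
    have "filterlim (\<lambda>N. 3 * bb N) at_top sequentially"
      by (rule filterlim_tendsto_pos_mult_at_top[OF tendsto_const _ lbinf]) simp
    then show "(\<lambda>N. inverse (3 * bb N)) \<longlonglongrightarrow> 0" by (rule tendsto_inverse_0_at_top)
  qed simp
  have lc: "(\<lambda>N. cc N / dt N powr (1/2)) \<longlonglongrightarrow> 1/(3*ell)"
  proof -
    have "(\<lambda>N. (1 - cc N^2)*sqrt(1+cc N^2)/(3*(bb N * dt N powr (1/2)))) \<longlonglongrightarrow> (1 - 0^2)*sqrt(1+0^2)/(3*ell)"
      using lpos by (intro tendsto_intros lc0 lb) auto
    moreover have "eventually (\<lambda>N. (1 - cc N^2)*sqrt(1+cc N^2)/(3*(bb N * dt N powr (1/2))) = cc N / dt N powr (1/2)) sequentially"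
      using evc
    proof eventually_elim
      case (elim N)
      show ?case by (subst (2) elim) simp
    qed
    ultimately show ?thesis by (simp add: Lim_transform_eventually)
  qed
  have ldt0: "(\<lambda>N. dt N powr (1/2)) \<longlonglongrightarrow> 0"
    unfolding dt_def by real_asymp
  have ld: "(\<lambda>N. dd N * dt N powr (1/2)) \<longlonglongrightarrow> 0"
  proof (rule tendsto_sandwich[of "\<lambda>_. 0" _ _ "\<lambda>N. 3/2 * dt N powr (1/2)"])
    show "eventually (\<lambda>N. 0 \<le> dd N * dt N powr (1/2)) sequentially" using evb by eventually_elim auto
    show "eventually (\<lambda>N. dd N * dt N powr (1/2) \<le> 3/2 * dt N powr (1/2)) sequentially"
      using evb by eventually_elim (intro mult_right_mono, auto)
    show "(\<lambda>N. 3/2 * dt N powr (1/2)) \<longlonglongrightarrow> 0" using tendsto_mult[OF tendsto_const ldt0, of "3/2"] by simp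
  qed simp
  have la: "(\<lambda>N. a N (nn N) * dt N powr (1/2)) \<longlonglongrightarrow> ell/2"
  proof -
    have "(\<lambda>N. (bb N * dt N powr (1/2) - dd N * dt N powr (1/2))/2) \<longlonglongrightarrow> (ell - 0)/2"
      by (intro tendsto_intros lb ld) simp
    moreover have "\<And>N. (bb N * dt N powr (1/2) - dd N * dt N powr (1/2))/2 = a N (nn N) * dt N powr (1/2)"
      unfolding bb_def dd_def by (simp add: algebra_simps)
    ultimately show ?thesis by simp
  qed
  have lainf: "filterlim (\<lambda>N. a N (nn N)) at_top sequentially"
  proof (rule filterlim_at_top_mono[OF filterlim_tendsto_pos_mult_at_top[OF la _ sqrtN]])
    show "eventually (\<lambda>N. a N (nn N) * dt N powr (1/2) * sqrt (real N) \<le> a N (nn N)) sequentially"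
      using dtsq by eventually_elim (simp add: mult.assoc)
  qed (use lpos in simp)
  define SS where "SS N = Sigma c S0 N (nn N)" for N
  define SS' where "SS' N = Sigma c S0 N (nn N - 1)" for N
  have PPpos: "PP N > 0" for N unfolding PP_def by (intro prod_pos) (auto simp: add_pos_nonneg)
  have SSe: "SS N = S0 / PP N" for N unfolding SS_def PP_def Sigma_P ..
  have SSpos: "SS N > 0" for N unfolding SSe using PPpos S0pos by simp
  have SS'pos: "SS' N > 0" for N unfolding SS'_def Sigma_P using S0pos
    by (intro divide_pos_pos prod_pos) (auto simp: add_pos_nonneg)
  have lR: "(\<lambda>N. B N / B0 N) \<longlonglongrightarrow> 1 - t"
  proof -
    have e: "((1-t)/3) / (1/(3::real)) = 1 - t" by simp
    have "(\<lambda>N. (B N / real N) / (B0 N / real N)) \<longlonglongrightarrow> ((1-t)/3) / (1/3)"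
      by (rule tendsto_divide[OF lB lB0]) simp
    then have "(\<lambda>N. (B N / real N) / (B0 N / real N)) \<longlonglongrightarrow> 1 - t" unfolding e .
    moreover have "eventually (\<lambda>N. (B N / real N) / (B0 N / real N) = B N / B0 N) sequentially"
      using evN by eventually_elim simp
    ultimately show ?thesis by (rule Lim_transform_eventually)
  qed
  have lE: "(\<lambda>N. EE N) \<longlonglongrightarrow> 1" unfolding EE_def using tt by real_asymp
  have lS3: "(\<lambda>N. SS N^3) \<longlonglongrightarrow> S0^3*(1-t)"
  proof (rule tendsto_sandwich[of "\<lambda>N. S0^3*(B N/B0 N)" _ _ "\<lambda>N. S0^3*(B N/B0 N)*EE N"])
    have evS: "eventually (\<lambda>N. S0^3*(B N/B0 N) \<le> (S0/PP N)^3 \<and> (S0/PP N)^3 \<le> S0^3*(B N/B0 N)*EE N) sequentially"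
      using evB0 evb evP evN
    proof eventually_elim
      case (elim N)
      have Bp: "B N > 0" using elim(2) unfolding B_def bb_def by simp
      have "real N \<ge> 1" using elim(4) by simp
      then have "(real N - 1)/3 \<ge> 0" by simp
      then have "1/6 + (real N - 1)/3 > 0" by linarith
      then have B0p: "B0 N > 0" using elim(1) by linarith
      show ?case using SigBnd[OF PPpos Bp B0p S0pos] elim(3) by blast
    qed
    show "eventually (\<lambda>N. S0^3*(B N/B0 N) \<le> SS N^3) sequentially"
      using evS unfolding SSe by (rule eventually_mono) blast
    show "eventually (\<lambda>N. SS N^3 \<le> S0^3*(B N/B0 N)*EE N) sequentially"
      using evS unfolding SSe by (rule eventually_mono) blast
    show "(\<lambda>N. S0^3*(B N/B0 N)) \<longlonglongrightarrow> S0^3*(1-t)" by (intro tendsto_intros lR)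
    show "(\<lambda>N. S0^3*(B N/B0 N)*EE N) \<longlonglongrightarrow> S0^3*(1-t)"
      using tendsto_mult[OF tendsto_mult[OF tendsto_const lR] lE, of "S0^3"] by simp
  qed
  define Sg where "Sg = (1-t) powr (1/3) * S0"
  have Sgpos: "Sg > 0" unfolding Sg_def using tt S0pos by simp
  have lS: "(\<lambda>N. SS N) \<longlonglongrightarrow> Sg"
  proof -
    have "(\<lambda>N. (SS N^3) powr (1/3)) \<longlonglongrightarrow> (S0^3*(1-t)) powr (1/3)"
      by (rule tendsto_powr[OF lS3 tendsto_const]) (use tt S0pos in simp)
    moreover have "(S0^3*(1-t)) powr (1/3) = Sg" unfolding Sg_def using G4[of "1-t" S0] tt S0pos by simp
    ultimately show ?thesis using cube_root[OF SSpos] by simp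
  qed
  have lS': "(\<lambda>N. SS' N) \<longlonglongrightarrow> Sg"
  proof -
    have "(\<lambda>N. SS N * (1 + cc N^2)) \<longlonglongrightarrow> Sg * (1 + 0^2)" by (intro tendsto_intros lS lc0)
    moreover have "eventually (\<lambda>N. SS N * (1 + cc N^2) = SS' N) sequentially"
      using evn
    proof eventually_elim
      case (elim N)
      then have e: "nn N = Suc (nn N - 1)" by simp
      have p: "1 + c N (nn N)^2 > 0" by (simp add: add_pos_nonneg)
      have "SS N = SS' N / (1 + c N (nn N)^2)" unfolding SS_def SS'_def by (subst e, subst Sigma.simps(2), subst e[symmetric], rule refl)
      then show ?case using p unfolding cc_def by simp
    qed
    ultimately show ?thesis by (simp add: Lim_transform_eventually)
  qed
  define Lb where "Lb = 1/(3*ell) * su * Sg powr (-1/2)"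
  have dtpos: "dt N > 0" if "N \<ge> 1" for N using that by (simp add: dt_def)
  have lbeta: "(\<lambda>N. beta c S0 su N (nn N) / dt N) \<longlonglongrightarrow> Lb"
  proof -
    have "(\<lambda>N. cc N / dt N powr (1/2) * su * SS' N powr (-1/2)) \<longlonglongrightarrow> 1/(3*ell) * su * Sg powr (-1/2)"
      by (intro tendsto_mult tendsto_const lc tendsto_powr lS') (use Sgpos in simp)
    moreover have "eventually (\<lambda>N. cc N / dt N powr (1/2) * su * SS' N powr (-1/2) = beta c S0 su N (nn N) / dt N) sequentially"
      using evN
    proof eventually_elim
      case (elim N)
      show ?case unfolding beta_def cc_def SS'_def using betaAux[OF dtpos[OF elim]] by simp
    qed
    ultimately show ?thesis unfolding Lb_def by (simp add: Lim_transform_eventually)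
  qed
  have ldt: "(\<lambda>N. dt N) \<longlonglongrightarrow> 0" unfolding dt_def by real_asymp
  have llam: "(\<lambda>N. lambda c S0 su N (nn N)) \<longlonglongrightarrow> Lb * Sg / (Lb^2 * Sg * 0 + su^2)"
  proof -
    have "(\<lambda>N. (beta c S0 su N (nn N) / dt N) * SS' N / ((beta c S0 su N (nn N) / dt N)^2 * SS' N * dt N + su^2))
        \<longlonglongrightarrow> Lb * Sg / (Lb^2 * Sg * 0 + su^2)"
      by (intro tendsto_intros lbeta lS' ldt) (use supos in simp)
    moreover have "eventually (\<lambda>N. (beta c S0 su N (nn N) / dt N) * SS' N / ((beta c S0 su N (nn N) / dt N)^2 * SS' N * dt N + su^2)
        = lambda c S0 su N (nn N)) sequentially"
      using evN
    proof eventually_elim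
      case (elim N)
      show ?case unfolding lambda_def SS'_def[symmetric]
        by (rule lamAux[OF dtpos[OF elim] SS'pos[of N] supos, symmetric])
    qed
    ultimately show ?thesis by (simp add: Lim_transform_eventually)
  qed
  have u: "1 - t > 0" using tt by simp
  have E1: "1/(3*ell) = sqrt 3 / 3 * (1 / (1 - t) powr (1/2))" unfolding ell_def by (rule G1[OF u])
  have E2: "ell = sqrt 3 / 3 * (1 - t) powr (1/2)" unfolding ell_def by (rule G2[OF u])
  have E3: "ell/2 = sqrt 3 / 6 * (1 - t) powr (1/2)" unfolding ell_def by (rule G3[OF u])
  have E5: "Lb = sqrt 3 * su / (3 * (1 - t) powr (2/3) * S0 powr (1/2))"
    unfolding Lb_def Sg_def ell_def by (rule G5[OF u S0pos supos])
  have E6: "Lb * Sg / (Lb^2 * Sg * 0 + su^2) = sqrt 3 * S0 powr (1/2) / (3 * (1 - t) powr (1/3) * su)"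
    unfolding E5 Sg_def using G6[OF u S0pos supos] by simp
  have R1: "(\<lambda>N. c N (nat \<lfloor>real N * t\<rfloor>)) \<longlonglongrightarrow> 0" using lc0 unfolding cc_def nn_def .
  have R2: "filterlim (\<lambda>N. b N (nat \<lfloor>real N * t\<rfloor>)) at_top sequentially" using lbinf unfolding bb_def nn_def .
  have R3: "filterlim (\<lambda>N. a N (nat \<lfloor>real N * t\<rfloor>)) at_top sequentially" using lainf unfolding nn_def .
  have R4: "(\<lambda>N. c N (nat \<lfloor>real N * t\<rfloor>) / dt N powr (1/2)) \<longlonglongrightarrow> sqrt 3 / 3 * (1 / (1 - t) powr (1/2))"
    using lc unfolding cc_def nn_def E1 .
  have R5: "(\<lambda>N. b N (nat \<lfloor>real N * t\<rfloor>) * dt N powr (1/2)) \<longlonglongrightarrow> sqrt 3 / 3 * (1 - t) powr (1/2)"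
    using lb unfolding bb_def nn_def E2 .
  have R6: "(\<lambda>N. a N (nat \<lfloor>real N * t\<rfloor>) * dt N powr (1/2)) \<longlonglongrightarrow> sqrt 3 / 6 * (1 - t) powr (1/2)"
    using la unfolding nn_def E3 .
  have R7: "(\<lambda>N. Sigma c S0 N (nat \<lfloor>real N * t\<rfloor>)) \<longlonglongrightarrow> (1 - t) powr (1/3) * S0"
    using lS unfolding SS_def nn_def Sg_def .
  have R8: "(\<lambda>N. lambda c S0 su N (nat \<lfloor>real N * t\<rfloor>)) \<longlonglongrightarrow> sqrt 3 * S0 powr (1/2) / (3 * (1 - t) powr (1/3) * su)"
    using llam unfolding nn_def E6 .
  have R9: "(\<lambda>N. beta c S0 su N (nat \<lfloor>real N * t\<rfloor>) / dt N) \<longlonglongrightarrow> sqrt 3 * su / (3 * (1 - t) powr (2/3) * S0 powr (1/2))"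
    using lbeta unfolding nn_def E5 .
  show ?thesis using R1 R2 R3 R4 R5 R6 R7 R8 R9 by blast
qed


end
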